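(* Suppose the Low-Rank MDP satisfies $\eta$-feature coverage for some $\eta>0$: for all $h\in[H-1]$, $$\sup_{\pi\in\Pi_{\mathrm{M}}}\lambda_{\min}\big(\mathbb{E}^\pi[\phi^\star_h(x_h,a_h)\phi^\star_h(x_h,a_h)^\top]\big)\ge\eta.$$ Then the MDP satisfies $(\eta/2)^{3/2}$-reachability: for all $h\in\{2,\dots,H\}$ and $x\in\mathcal{X}_h$, $\sup_{\pi\in\Pi_{\mathrm{M}}}d^\pi(x)\ge(\eta/2)^{3/2}\|\mu^\star_h(x)\|$.
   Context: Setting (Low-Rank MDP). Fix horizon $H\in\mathbb{N}$, dimension $d\in\mathbb{N}$, a finite action set $\mathcal{A}$ with $|\mathcal{A}|=A$, and a measurable state space $\mathcal{X}=\mathcal{X}_1\sqcup\cdots\sqcup\mathcal{X}_H$ (disjoint layers) carrying a $\sigma$-finite measure $\nu$. The MDP $\mathcal{M}$ has an initial distribution $\rho$ on $\mathcal{X}_1$ and, for each $h\in[H-1]$, measurable maps $\phi^\star_h:\mathcal{X}_h\times\mathcal{A}\to\mathbb{R}^d$ and $\mu^\star_{h+1}:\mathcal{X}_{h+1}\to\mathbb{R}^d$ such that for every $(x,a)\in\mathcal{X}_h\times\mathcal{A}$ the function $x'\mapsto\mu^\star_{h+1}(x')^\top\phi^\star_h(x,a)$ is a probability density w.r.t. $\nu$ on $\mathcal{X}_{h+1}$; this density is the transition kernel $T_h(\cdot\mid x,a)$. $\Pi_{\mathrm{M}}$ denotes the set of randomized Markov policies $\pi:\mathcal{X}\to\Delta(\mathcal{A})$;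 an episode under $\pi$ draws $x_1\sim\rho$, $a_h\sim\pi(x_h)$, $x_{h+1}\sim T_h(\cdot\mid x_h,a_h)$, and $\mathbb{P}^\pi,\mathbb{E}^\pi$ denote the law and expectation of the trajectory. For $h\ge2$ and $x\in\mathcal{X}_h$, $d^\pi(x)$ denotes the density w.r.t. $\nu$ of the law of $x_h$ under $\pi$ (so $d^\pi(x)=\mu^\star_h(x)^\top\mathbb{E}^\pi[\phi^\star_{h-1}(x_{h-1},a_{h-1})]$). Normalization: $\|\phi^\star_h(x,a)\|\le 1$ for all $h,x,a$. Here $\|\cdot\|$ is the Euclidean norm and $\lambda_{\min}$ the smallest eigenvalue. *)

theory Defs
  imports "HOL-Analysis.Analysis" "HOL-Probability.Probability"
begin

text \<open>Layered state space: a single measure space nu on states of type 's,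
 with a measurable layer map; layer h is X_h = {x. lay x = h}.\<close>

definition layer_set :: "('s \<Rightarrow> nat) \<Rightarrow> nat \<Rightarrow> 's set" where
  "layer_set lay h = {x. lay x = h}"

definition markov_policies :: "'s measure \<Rightarrow> ('s \<Rightarrow> 'a pmf) set" where
  "markov_policies nu = {pol. \<forall>a. (\<lambda>x. pmf (pol x) a) \<in> borel_measurable nu}"

definition feat_mean_of ::
  "'s measure \<Rightarrow> (nat \<Rightarrow> 's \<Rightarrow> 'a::finite \<Rightarrow> real^'d) \<Rightarrow> ('s \<Rightarrow> 'a pmf) \<Rightarrow> nat \<Rightarrow> real^'d" where
  "feat_mean_of M phi pol h = (\<integral>x. (\<Sum>a\<in>UNIV. pmf (pol x) a *\<^sub>R phi h x a) \<partial>M)"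

fun state_law ::
  "'s measure \<Rightarrow> 's measure \<Rightarrow> ('s \<Rightarrow> nat) \<Rightarrow> (nat \<Rightarrow> 's \<Rightarrow> real^'d)
   \<Rightarrow> (nat \<Rightarrow> 's \<Rightarrow> 'a::finite \<Rightarrow> real^'d) \<Rightarrow> ('s \<Rightarrow> 'a pmf) \<Rightarrow> nat \<Rightarrow> 's measure" where
  "state_law nu rho lay mu phi pol 0 = rho"
| "state_law nu rho lay mu phi pol (Suc 0) = rho"
| "state_law nu rho lay mu phi pol (Suc (Suc h)) =
     density nu (\<lambda>x'. ennreal (indicator (layer_set lay (Suc (Suc h))) x' *
        (mu (Suc (Suc h)) x' \<bullet> feat_mean_of (state_law nu rho lay mu phi pol (Suc h)) phi pol (Suc h))))"

definition feat_mean where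
  "feat_mean nu rho lay mu phi pol h = feat_mean_of (state_law nu rho lay mu phi pol h) phi pol h"

definition outer :: "real^'d \<Rightarrow> real^'d^'d" where
  "outer v = (\<chi> i j. v $ i * v $ j)"

definition feat_cov where
  "feat_cov nu rho lay mu phi pol h =
     (\<integral>x. (\<Sum>a\<in>UNIV. pmf (pol x) a *\<^sub>R outer (phi h x a)) \<partial>(state_law nu rho lay mu phi pol h))"

definition occ_density where
  "occ_density nu rho lay mu phi pol h x = mu h x \<bullet> feat_mean nu rho lay mu phi pol (h - 1)"

definition is_eigenvalue :: "real^'d^'d \<Rightarrow> real \<Rightarrow> bool" where
  "is_eigenvalue A c \<longleftrightarrow> (\<exists>v. v \<noteq> 0 \<and> A *v v = c *\<^sub>R v)"

definition lambda_min :: "real^'d^'d \<Rightarrow> real" where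
  "lambda_min A = Inf {c. is_eigenvalue A c}"

definition low_rank_mdp ::
  "nat \<Rightarrow> 's measure \<Rightarrow> 's measure \<Rightarrow> ('s \<Rightarrow> nat) \<Rightarrow> (nat \<Rightarrow> 's \<Rightarrow> real^'d)
   \<Rightarrow> (nat \<Rightarrow> 's \<Rightarrow> 'a::finite \<Rightarrow> real^'d) \<Rightarrow> bool" where
  "low_rank_mdp H nu rho lay mu phi \<longleftrightarrow>
     sigma_finite_measure nu \<and>
     lay \<in> measurable nu (count_space UNIV) \<and>
     (\<forall>x\<in>space nu. lay x \<in> {1..H}) \<and>
     prob_space rho \<and> sets rho = sets nu \<and>
     emeasure rho (space rho - layer_set lay 1) = 0 \<and>
     (\<forall>h\<in>{1..<H}. \<forall>a. (\<lambda>x. phi h x a) \<in> borel_measurable nu) \<and>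
     (\<forall>h\<in>{2..H}. mu h \<in> borel_measurable nu) \<and>
     (\<forall>h\<in>{1..<H}. \<forall>x\<in>space nu. \<forall>a. norm (phi h x a) \<le> 1) \<and>
     (\<forall>h\<in>{1..<H}. \<forall>x\<in>space nu \<inter> layer_set lay h. \<forall>a.
        (\<forall>x'\<in>space nu \<inter> layer_set lay (Suc h). mu (Suc h) x' \<bullet> phi h x a \<ge> 0) \<and>
        (\<integral>\<^sup>+x'. ennreal (indicator (layer_set lay (Suc h)) x' * (mu (Suc h) x' \<bullet> phi h x a)) \<partial>nu) = 1)"

end

theory Submission
  imports Defs
begin


lemma inner_mat_sym:
  fixes A :: "real^'d^'d" assumes "transpose A = A"
  shows "x \<bullet> (A *v y) = y \<bullet> (A *v x)"
proof -
  have "x \<bullet> (A *v y) = (x v* A) \<bullet> y" by (simp add: dot_lmul_matrix)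
  also have "x v* A = transpose A *v x" by simp
  finally show ?thesis using assms by (simp add: inner_commute)
qed

lemma rayleigh_exists:
  fixes A :: "real^'d^'d" assumes sym: "transpose A = A"
  shows "\<exists>m. is_eigenvalue A m \<and> (\<forall>u. m * (u \<bullet> u) \<le> u \<bullet> (A *v u))"
proof -
  define q where "q u = u \<bullet> (A *v u)" for u
  have cont: "continuous_on (sphere 0 1) q"
    unfolding q_def by (intro continuous_intros linear_continuous_on matrix_vector_mul_linear)
  obtain i :: 'd where True by blast
  have "axis i 1 \<in> sphere (0::real^'d) 1" by (simp add: dist_norm)
  hence ne: "sphere (0::real^'d) 1 \<noteq> {}" by blast
  obtain v0 where v0: "v0 \<in> sphere 0 1" and mn: "\<And>y. y \<in> sphere 0 1 \<Longrightarrow> q v0 \<le> q y"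
    using continuous_attains_inf[OF compact_sphere ne cont] by blast
  define m where "m = q v0"
  have nv0: "norm v0 = 1" using v0 by (simp add: dist_norm)
  have vv: "v0 \<bullet> v0 = 1" using nv0 by (simp add: norm_eq_1)
  have qs: "q (c *\<^sub>R u) = c^2 * q u" for c u
    by (simp add: q_def matrix_vector_mult_scaleR power2_eq_square)
  have low: "m * (u \<bullet> u) \<le> q u" for u
  proof (cases "u = 0")
    case True thus ?thesis by (simp add: q_def)
  next
    case False
    hence n: "norm u > 0" by simp
    have "(inverse (norm u)) *\<^sub>R u \<in> sphere 0 1" using n by (simp add: dist_norm)
    hence "m \<le> q ((inverse (norm u)) *\<^sub>R u)" using mn m_def by blast
    also have "\<dots> = q u / (norm u)^2" by (simp add: qs power_inverse divide_inverse_commute)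
    finally have "m * (norm u)^2 \<le> q u" using n by (simp add: field_simps)
    thus ?thesis by (simp add: power2_norm_eq_inner)
  qed
  define r where "r = A *v v0 - m *\<^sub>R v0"
  define C where "C = q r - m * (r \<bullet> r)"
  have key: "0 \<le> 2 * t * (r \<bullet> r) + t^2 * C" for t
  proof -
    define a where "a = r \<bullet> v0"
    define R where "R = r \<bullet> r"
    have l: "m * ((v0 + t *\<^sub>R r) \<bullet> (v0 + t *\<^sub>R r)) \<le> q (v0 + t *\<^sub>R r)" by (rule low)
    have e1: "q (v0 + t *\<^sub>R r) = m + 2 * t * (r \<bullet> (A *v v0)) + t^2 * q r"
      using inner_mat_sym[OF sym, of v0 r] unfolding m_def
      by (simp add: q_def matrix_vector_right_distrib inner_add_left inner_add_right
          matrix_vector_mult_scaleR power2_eq_square algebra_simps)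
    have e2: "(v0 + t *\<^sub>R r) \<bullet> (v0 + t *\<^sub>R r) = 1 + 2 * t * a + t^2 * R"
      using vv by (simp add: a_def R_def inner_add_left inner_add_right power2_eq_square algebra_simps inner_commute)
    have e3: "r \<bullet> (A *v v0) = R + m * a"
      by (simp add: r_def R_def a_def inner_diff_right algebra_simps)
    have h1: "m * (1 + 2 * t * a + t^2 * R) \<le> m + 2 * t * (R + m * a) + t^2 * q r"
      using l e1 e2 e3 by simp
    have h2: "2 * t * R + t^2 * (q r - m * R) = (m + 2 * t * (R + m * a) + t^2 * q r) - m * (1 + 2 * t * a + t^2 * R)"
      by (simp add: algebra_simps)
    show ?thesis using h1 h2 unfolding C_def R_def by linarith
  qed
  have "r = 0"
  proof (rule ccontr)
    assume "r \<noteq> 0"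
    hence rp: "r \<bullet> r > 0" by simp
    define s where "s = (r \<bullet> r) / (\<bar>C\<bar> + 1)"
    have sp: "s > 0" using rp by (simp add: s_def)
    have "0 \<le> 2 * (-s) * (r \<bullet> r) + (-s)^2 * C" by (rule key)
    hence "s * (2 * (r \<bullet> r)) \<le> s * (s * C)" by (simp add: power2_eq_square algebra_simps)
    hence "2 * (r \<bullet> r) \<le> s * C" using sp by simp
    moreover have "s * C \<le> s * \<bar>C\<bar>" using sp by (simp add: mult_left_mono)
    moreover have "s * \<bar>C\<bar> < r \<bullet> r" using rp by (simp add: s_def field_simps)
    ultimately show False using rp by linarith
  qed
  hence "A *v v0 = m *\<^sub>R v0" by (simp add: r_def)
  moreover have "v0 \<noteq> 0" using nv0 by auto
  ultimately have "is_eigenvalue A m" unfolding is_eigenvalue_def by blast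
  thus ?thesis using low by (auto simp: q_def)
qed

lemma rayleigh:
  fixes A :: "real^'d^'d" assumes sym: "transpose A = A"
  shows "lambda_min A * (u \<bullet> u) \<le> u \<bullet> (A *v u)"
proof -
  obtain m where m: "is_eigenvalue A m" and low: "\<And>u. m * (u \<bullet> u) \<le> u \<bullet> (A *v u)"
    using rayleigh_exists[OF sym] by blast
  have "lambda_min A = m" unfolding lambda_min_def
  proof (rule cInf_eq_minimum)
    show "m \<in> {c. is_eigenvalue A c}" using m by simp
    fix c assume "c \<in> {c. is_eigenvalue A c}"
    then obtain v where v: "v \<noteq> 0" "A *v v = c *\<^sub>R v" by (auto simp: is_eigenvalue_def)
    have "m * (v \<bullet> v) \<le> c * (v \<bullet> v)" using low[of v] v by simp
    thus "m \<le> c" using v by simp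
  qed
  thus ?thesis using low by simp
qed



locale lrm =
  fixes H :: nat and nu rho :: "'s measure" and lay :: "'s \<Rightarrow> nat"
    and mu :: "nat \<Rightarrow> 's \<Rightarrow> real^'d"
    and phi :: "nat \<Rightarrow> 's \<Rightarrow> 'a::finite \<Rightarrow> real^'d"
  assumes mdp: "low_rank_mdp H nu rho lay mu phi"
begin

lemma sfin: "sigma_finite_measure nu" using mdp by (simp add: low_rank_mdp_def)
lemma lay_m[measurable]: "lay \<in> measurable nu (count_space UNIV)" using mdp by (simp add: low_rank_mdp_def)
lemma rho_prob: "prob_space rho" using mdp by (simp add: low_rank_mdp_def)
lemma rho_sets: "sets rho = sets nu" using mdp by (simp add: low_rank_mdp_def)
lemma rho_l1: "emeasure rho (space rho - layer_set lay 1) = 0" using mdp by (simp add: low_rank_mdp_def)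
lemma phi_m: "h \<in> {1..<H} \<Longrightarrow> (\<lambda>x. phi h x a) \<in> borel_measurable nu" using mdp by (simp add: low_rank_mdp_def)
lemma mu_m: "h \<in> {2..H} \<Longrightarrow> mu h \<in> borel_measurable nu" using mdp by (simp add: low_rank_mdp_def)
lemma phi_b: "h \<in> {1..<H} \<Longrightarrow> x \<in> space nu \<Longrightarrow> norm (phi h x a) \<le> 1" using mdp by (simp add: low_rank_mdp_def)
lemma nonneg: "h \<in> {1..<H} \<Longrightarrow> x \<in> space nu \<Longrightarrow> lay x = h \<Longrightarrow> x' \<in> space nu \<Longrightarrow> lay x' = Suc h
   \<Longrightarrow> 0 \<le> mu (Suc h) x' \<bullet> phi h x a"
  using mdp by (simp add: low_rank_mdp_def layer_set_def)
lemma int1: "h \<in> {1..<H} \<Longrightarrow> x \<in> space nu \<Longrightarrow> lay x = h \<Longrightarrow>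
   (\<integral>\<^sup>+x'. ennreal (indicator (layer_set lay (Suc h)) x' * (mu (Suc h) x' \<bullet> phi h x a)) \<partial>nu) = 1"
  using mdp by (simp add: low_rank_mdp_def layer_set_def)

definition psi where "psi pol h y = (\<Sum>a\<in>UNIV. pmf (pol y) a *\<^sub>R phi h y a)"

lemma psi_m: assumes "pol \<in> markov_policies nu" "h \<in> {1..<H}"
  shows "psi pol h \<in> borel_measurable nu"
proof -
  have [measurable]: "(\<lambda>x. pmf (pol x) a) \<in> borel_measurable nu" for a
    using assms by (simp add: markov_policies_def)
  have [measurable]: "(\<lambda>x. phi h x a) \<in> borel_measurable nu" for a using phi_m assms by simp
  show ?thesis unfolding psi_def by measurable
qed

lemma psi_b: assumes "h \<in> {1..<H}" "y \<in> space nu" shows "norm (psi pol h y) \<le> 1"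
proof -
  have "norm (psi pol h y) \<le> (\<Sum>a\<in>UNIV. norm (pmf (pol y) a *\<^sub>R phi h y a))"
    unfolding psi_def by (rule norm_sum)
  also have "\<dots> \<le> (\<Sum>a\<in>UNIV. pmf (pol y) a)"
    by (intro sum_mono) (use phi_b[OF assms] in \<open>auto intro: mult_left_le\<close>)
  also have "\<dots> = 1" by (simp add: sum_pmf_eq_1)
  finally show ?thesis .
qed

lemma psi_inner: "c \<bullet> psi pol h y = (\<Sum>a\<in>UNIV. pmf (pol y) a * (c \<bullet> phi h y a))"
  by (simp add: psi_def inner_sum_right)

lemma ind_eq: "indicator (layer_set lay k) x = (if lay x = k then 1 else (0::real))"
  by (simp add: layer_set_def indicator_def)

abbreviation L where "L pol k \<equiv> state_law nu rho lay mu phi pol k"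

lemma law_step:
  assumes pol: "pol \<in> markov_policies nu" and n: "1 \<le> n" "Suc n \<le> H"
    and P: "prob_space (L pol n)" and S: "sets (L pol n) = sets nu" and A: "AE y in L pol n. lay y = n"
  shows "prob_space (L pol (Suc n)) \<and> sets (L pol (Suc n)) = sets nu \<and> (AE y in L pol (Suc n). lay y = Suc n)"
proof -
  obtain j where j: "n = Suc j" using n by (cases n) auto
  define M where "M = L pol n"
  define m where "m = feat_mean_of M phi pol n"
  define f where "f x' = ennreal (indicator (layer_set lay (Suc n)) x' * (mu (Suc n) x' \<bullet> m))" for x'
  have Ld: "L pol (Suc n) = density nu f" unfolding f_def m_def M_def j by simp
  have hn: "n \<in> {1..<H}" using n by simp
  have [measurable]: "mu (Suc n) \<in> borel_measurable nu" using mu_m n by simp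
  have [measurable]: "(\<lambda>x. pmf (pol x) a) \<in> borel_measurable nu" for a
    using pol by (simp add: markov_policies_def)
  have [measurable]: "(\<lambda>x. phi n x a) \<in> borel_measurable nu" for a using phi_m hn by simp
  have psim[measurable]: "psi pol n \<in> borel_measurable nu" using psi_m[OF pol hn] .
  interpret M: prob_space M using P M_def by simp
  have SM: "sets M = sets nu" using S M_def by simp
  have spM: "space M = space nu" using sets_eq_imp_space_eq[OF SM] .
  have AM: "AE y in M. lay y = n \<and> y \<in> space nu" using A spM M_def by auto
  have psiM: "psi pol n \<in> borel_measurable M" using psim measurable_cong_sets[OF SM refl] by blast
  have intpsi: "integrable M (psi pol n)"
    by (rule M.integrable_const_bound[where B=1]) (use psi_b[OF hn] spM psiM in auto)
  have mdef: "m = integral\<^sup>L M (psi pol n)" unfolding m_def feat_mean_of_def psi_def ..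
  have fm[measurable]: "f \<in> borel_measurable nu" unfolding f_def ind_eq by measurable
  have nn: "0 \<le> mu (Suc n) x' \<bullet> psi pol n y" if "x' \<in> space nu" "lay x' = Suc n" "y \<in> space nu" "lay y = n" for x' y
    unfolding psi_inner using nonneg[OF hn that(3,4) that(1,2)] by (auto intro!: sum_nonneg)
  define G where "G y x' = ennreal (indicator (layer_set lay (Suc n)) x' * (mu (Suc n) x' \<bullet> psi pol n y))" for y x'
  have A1: "f x' = (\<integral>\<^sup>+y. G y x' \<partial>M)" if x': "x' \<in> space nu" for x'
  proof (cases "lay x' = Suc n")
    case False thus ?thesis by (simp add: f_def G_def ind_eq)
  next
    case True
    have "f x' = ennreal (mu (Suc n) x' \<bullet> m)" by (simp add: f_def ind_eq True)
    also have "mu (Suc n) x' \<bullet> m = (\<integral>y. mu (Suc n) x' \<bullet> psi pol n y \<partial>M)"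
      using intpsi by (simp add: mdef)
    also have "ennreal \<dots> = (\<integral>\<^sup>+y. ennreal (mu (Suc n) x' \<bullet> psi pol n y) \<partial>M)"
      by (rule nn_integral_eq_integral[symmetric]) (use intpsi AM nn[OF x' True] in auto)
    also have "\<dots> = (\<integral>\<^sup>+y. G y x' \<partial>M)" by (simp add: G_def ind_eq True)
    finally show ?thesis .
  qed
  have A2: "(\<integral>\<^sup>+x'. G y x' \<partial>nu) = 1" if y: "y \<in> space nu" "lay y = n" for y
  proof -
    have "(\<integral>\<^sup>+x'. G y x' \<partial>nu) = (\<integral>\<^sup>+x'. (\<Sum>a\<in>UNIV. ennreal (pmf (pol y) a) *
        ennreal (indicator (layer_set lay (Suc n)) x' * (mu (Suc n) x' \<bullet> phi n y a))) \<partial>nu)"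
    proof (intro nn_integral_cong)
      fix x' assume x': "x' \<in> space nu"
      have t: "0 \<le> indicator (layer_set lay (Suc n)) x' * (mu (Suc n) x' \<bullet> phi n y a)" for a
        using nonneg[OF hn y(1,2) x'] by (simp add: ind_eq)
      have "G y x' = ennreal (\<Sum>a\<in>UNIV. pmf (pol y) a * (indicator (layer_set lay (Suc n)) x' * (mu (Suc n) x' \<bullet> phi n y a)))"
        unfolding G_def psi_inner by (simp add: sum_distrib_left algebra_simps)
      also have "\<dots> = (\<Sum>a\<in>UNIV. ennreal (pmf (pol y) a * (indicator (layer_set lay (Suc n)) x' * (mu (Suc n) x' \<bullet> phi n y a))))"
        by (rule sum_ennreal[symmetric]) (use t in auto)
      also have "\<dots> = (\<Sum>a\<in>UNIV. ennreal (pmf (pol y) a) * ennreal (indicator (layer_set lay (Suc n)) x' * (mu (Suc n) x' \<bullet> phi n y a)))"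
        by (intro sum.cong refl) (simp add: ennreal_mult')
      finally show "G y x' = \<dots>" .
    qed
    also have "\<dots> = (\<Sum>a\<in>UNIV. ennreal (pmf (pol y) a) * (\<integral>\<^sup>+x'.
        ennreal (indicator (layer_set lay (Suc n)) x' * (mu (Suc n) x' \<bullet> phi n y a)) \<partial>nu))"
    proof -
      have gm: "(\<lambda>x'. ennreal (indicator (layer_set lay (Suc n)) x' * (mu (Suc n) x' \<bullet> phi n y a))) \<in> borel_measurable nu" for a
        unfolding ind_eq by measurable
      have "(\<integral>\<^sup>+x'. (\<Sum>a\<in>UNIV. ennreal (pmf (pol y) a) *
        ennreal (indicator (layer_set lay (Suc n)) x' * (mu (Suc n) x' \<bullet> phi n y a))) \<partial>nu)
        = (\<Sum>a\<in>UNIV. (\<integral>\<^sup>+x'. ennreal (pmf (pol y) a) *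
        ennreal (indicator (layer_set lay (Suc n)) x' * (mu (Suc n) x' \<bullet> phi n y a)) \<partial>nu))"
        by (rule nn_integral_sum) (use gm in measurable)
      also have "\<dots> = (\<Sum>a\<in>UNIV. ennreal (pmf (pol y) a) * (\<integral>\<^sup>+x'. ennreal (indicator (layer_set lay (Suc n)) x' * (mu (Suc n) x' \<bullet> phi n y a)) \<partial>nu))" by (intro sum.cong refl nn_integral_cmult gm)
      finally show ?thesis .
    qed
    also have "\<dots> = (\<Sum>a\<in>UNIV. ennreal (pmf (pol y) a))" using int1[OF hn y] by simp
    also have "\<dots> = 1" by (simp add: sum_pmf_eq_1)
    finally show ?thesis .
  qed
  have Gm: "(\<lambda>(y, x'). G y x') \<in> borel_measurable (M \<Otimes>\<^sub>M nu)"
  proof -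
    have m1: "(\<lambda>p. mu (Suc n) (snd p) \<bullet> psi pol n (fst p)) \<in> borel_measurable (nu \<Otimes>\<^sub>M nu)"
      by (intro borel_measurable_inner measurable_compose[OF measurable_snd] measurable_compose[OF measurable_fst] psim) simp
    have m2: "(\<lambda>p. (if lay (snd p) = Suc n then 1 else (0::real))) \<in> borel_measurable (nu \<Otimes>\<^sub>M nu)"
      by measurable
    have "(\<lambda>p. ennreal ((if lay (snd p) = Suc n then 1 else (0::real)) * (mu (Suc n) (snd p) \<bullet> psi pol n (fst p)))) \<in> borel_measurable (nu \<Otimes>\<^sub>M nu)"
      using m1 m2 by measurable
    hence "(\<lambda>(y, x'). G y x') \<in> borel_measurable (nu \<Otimes>\<^sub>M nu)" by (simp add: G_def ind_eq case_prod_beta)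
    thus ?thesis using measurable_cong_sets[OF sets_pair_measure_cong[OF SM refl] refl] by blast
  qed
  interpret PS: pair_sigma_finite M nu
    unfolding pair_sigma_finite_def using sfin M.sigma_finite_measure_axioms by simp
  have "(\<integral>\<^sup>+x'. f x' \<partial>nu) = (\<integral>\<^sup>+x'. (\<integral>\<^sup>+y. G y x' \<partial>M) \<partial>nu)"
    by (intro nn_integral_cong A1)
  also have "\<dots> = (\<integral>\<^sup>+y. (\<integral>\<^sup>+x'. G y x' \<partial>nu) \<partial>M)"
    using PS.Fubini[OF Gm] by (simp only: prod.case)
  also have "\<dots> = (\<integral>\<^sup>+y. 1 \<partial>M)"
    by (rule nn_integral_cong_AE) (use AM in \<open>eventually_elim, simp add: A2\<close>)
  also have "\<dots> = 1" by (simp add: M.emeasure_space_1)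
  finally have tot: "(\<integral>\<^sup>+x'. f x' \<partial>nu) = 1" .
  have "emeasure (density nu f) (space (density nu f)) = (\<integral>\<^sup>+x. f x * indicator (space nu) x \<partial>nu)"
    by (simp only: space_density) (rule emeasure_density[OF fm sets.top])
  also have "\<dots> = (\<integral>\<^sup>+x'. f x' \<partial>nu)" by (intro nn_integral_cong) simp
  finally have "emeasure (density nu f) (space (density nu f)) = 1" using tot by simp
  hence "prob_space (density nu f)" by (rule prob_spaceI)
  moreover have "sets (density nu f) = sets nu" by simp
  moreover have "AE y in density nu f. lay y = Suc n"
    unfolding AE_density[OF fm] by (rule AE_I2) (auto simp: f_def ind_eq)
  ultimately show ?thesis unfolding Ld by blast
qed

end


lemma outer_mult: "outer v *v t = (v \<bullet> t) *\<^sub>R (v::real^'d)"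
  by (simp add: vec_eq_iff outer_def matrix_vector_mult_def inner_vec_def sum_distrib_left algebra_simps)

lemma transpose_outer: "transpose (outer v) = outer v"
  by (simp add: vec_eq_iff outer_def transpose_def)

lemma outer_row: "outer v $ i = (v $ i) *\<^sub>R (v::real^'d)"
  by (simp add: vec_eq_iff outer_def)

lemma norm_outer: "norm (outer (v::real^'d)) \<le> real CARD('d) * (norm v * norm v)"
proof -
  have "norm (outer v) \<le> (\<Sum>i\<in>UNIV. norm (outer v $ i))"
    by (simp add: norm_vec_def L2_set_le_sum)
  also have "\<dots> \<le> (\<Sum>i\<in>(UNIV::'d set). norm v * norm v)"
    by (intro sum_mono) (simp add: outer_row mult_right_mono component_le_norm_cart)
  finally show ?thesis by simp
qed

lemma linear_transpose: "linear (transpose :: real^'n^'m \<Rightarrow> real^'m^'n)"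
  by (rule linearI) (simp_all add: transpose_def vec_eq_iff transpose_scalar)

lemma cont_outer: "continuous_on UNIV (outer :: real^'d \<Rightarrow> _)"
  unfolding outer_def by (intro continuous_intros)

context lrm begin

lemma law: assumes pol: "pol \<in> markov_policies nu"
  shows "1 \<le> k \<Longrightarrow> k \<le> H \<Longrightarrow> prob_space (L pol k) \<and> sets (L pol k) = sets nu \<and> (AE y in L pol k. lay y = k)"
proof (induction k)
  case 0 then show ?case by simp
next
  case (Suc k)
  show ?case
  proof (cases "k = 0")
    case True
    have lr[measurable]: "lay \<in> measurable rho (count_space UNIV)"
      using lay_m measurable_cong_sets[OF rho_sets refl] by blast
    have Ns: "{y \<in> space rho. lay y \<noteq> 1} \<in> sets rho" by measurable
    have Ne: "{y \<in> space rho. lay y \<noteq> 1} = space rho - layer_set lay 1" by (auto simp: layer_set_def)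
    have Nn: "{y \<in> space rho. lay y \<noteq> 1} \<in> null_sets rho"
      using Ns rho_l1 unfolding Ne by (simp add: null_sets_def)
    have ae: "AE y in rho. lay y = 1"
      by (rule AE_I'[OF Nn]) auto
    have e: "L pol (Suc 0) = rho" by (rule state_law.simps(2))
    show ?thesis unfolding True e using rho_prob rho_sets ae by simp
  next
    case False
    hence "1 \<le> k" "k \<le> H" using Suc by auto
    from Suc.IH[OF this] show ?thesis using law_step[OF pol \<open>1 \<le> k\<close>] Suc by auto
  qed
qed

lemma pols_ne: "markov_policies nu \<noteq> {}"
proof -
  have "(\<lambda>_. return_pmf undefined) \<in> markov_policies nu" by (simp add: markov_policies_def)
  thus ?thesis by blast
qed

lemma main:
  assumes eta_pos: "eta > 0"
    and coverage: "\<forall>h\<in>{1..<H}.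
        (SUP pol\<in>markov_policies nu. lambda_min (feat_cov nu rho lay mu phi pol h)) \<ge> eta"
    and h: "h \<in> {2..H}" and x: "x \<in> space nu \<inter> layer_set lay h"
  shows "(SUP pol\<in>markov_policies nu. occ_density nu rho lay mu phi pol h x)
          \<ge> (eta / 2) powr (3 / 2) * norm (mu h x)"
proof -
  define g where "g = h - 1"
  have hg: "h = Suc g" using h g_def by auto
  have gH: "g \<in> {1..<H}" using h g_def by auto
  have xs: "x \<in> space nu" "lay x = Suc g" using x hg by (auto simp: layer_set_def)
  define P where "P = (markov_policies nu :: ('s \<Rightarrow> 'a pmf) set)"
  have occ: "occ_density nu rho lay mu phi pol h x = mu h x \<bullet> integral\<^sup>L (L pol g) (psi pol g)" for pol
    by (simp add: occ_density_def feat_mean_def feat_mean_of_def psi_def[abs_def] g_def)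
  have LP: "prob_space (L pol g) \<and> sets (L pol g) = sets nu \<and> (AE y in L pol g. lay y = g \<and> y \<in> space nu)"
    if "pol \<in> P" for pol
  proof -
    have "prob_space (L pol g) \<and> sets (L pol g) = sets nu \<and> (AE y in L pol g. lay y = g)"
      using law[of pol g] that gH P_def by auto
    moreover have "space (L pol g) = space nu" if "sets (L pol g) = sets nu" using sets_eq_imp_space_eq[OF that] .
    ultimately show ?thesis by auto
  qed
  have intpsi: "integrable (L pol g) (psi pol g)" and npsi: "norm (integral\<^sup>L (L pol g) (psi pol g)) \<le> 1"
    if "pol \<in> P" for pol
  proof -
    interpret M: prob_space "L pol g" using LP[OF that] by simp
    have S: "sets (L pol g) = sets nu" using LP[OF that] by simp
    have psiM: "psi pol g \<in> borel_measurable (L pol g)"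
      using psi_m[of pol g] that P_def gH measurable_cong_sets[OF S refl] by blast
    have sp: "space (L pol g) = space nu" using sets_eq_imp_space_eq[OF S] .
    show i: "integrable (L pol g) (psi pol g)"
      by (rule M.integrable_const_bound[where B=1]) (use psi_b[OF gH] sp psiM in auto)
    have "norm (integral\<^sup>L (L pol g) (psi pol g)) \<le> (\<integral>y. norm (psi pol g y) \<partial>L pol g)" by simp
    also have "\<dots> \<le> 1" by (rule M.integral_le_const) (use i psi_b[OF gH] sp in auto)
    finally show "norm (integral\<^sup>L (L pol g) (psi pol g)) \<le> 1" .
  qed
  have bdd: "bdd_above ((\<lambda>pol. occ_density nu rho lay mu phi pol h x) ` P)"
  proof (rule bdd_aboveI2)
    fix pol assume "pol \<in> P"
    have "occ_density nu rho lay mu phi pol h x \<le> norm (mu h x) * norm (integral\<^sup>L (L pol g) (psi pol g))"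
      unfolding occ by (rule norm_cauchy_schwarz)
    also have "\<dots> \<le> norm (mu h x)" using npsi[OF \<open>pol \<in> P\<close>] by (simp add: mult_left_le)
    finally show "occ_density nu rho lay mu phi pol h x \<le> norm (mu h x)" .
  qed
  have Pne: "P \<noteq> {}" using pols_ne P_def by simp
  show ?thesis
  proof (cases "mu h x = 0")
    case True
    have e0: "(\<lambda>pol. occ_density nu rho lay mu phi pol h x) = (\<lambda>_. 0)" by (rule ext) (simp add: occ True)
    have "(SUP pol\<in>P. occ_density nu rho lay mu phi pol h x) = 0" unfolding e0 using Pne by (rule cSUP_const)
    thus ?thesis using True P_def by simp
  next
    case False
    define nm where "nm = norm (mu h x)"
    have nmp: "nm > 0" using False nm_def by simp
    define th where "th = (1 / nm) *\<^sub>R mu h x"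
    have nth: "norm th = 1" using nmp by (simp add: th_def nm_def)
    have tt: "th \<bullet> th = 1" using nth by (simp add: norm_eq_1)
    have cov: "eta \<le> (SUP pol\<in>P. lambda_min (feat_cov nu rho lay mu phi pol g))"
      using coverage gH P_def by simp
    obtain pol where pol: "pol \<in> P" and lam: "eta / 2 < lambda_min (feat_cov nu rho lay mu phi pol g)"
    proof (cases "bdd_above ((\<lambda>pol. lambda_min (feat_cov nu rho lay mu phi pol g)) ` P)")
      case True
      have "eta / 2 < (SUP pol\<in>P. lambda_min (feat_cov nu rho lay mu phi pol g))" using cov eta_pos by simp
      thus ?thesis using less_cSUP_iff[OF Pne True] that by blast
    next
      case False
      hence "\<exists>pol\<in>P. \<not> lambda_min (feat_cov nu rho lay mu phi pol g) \<le> eta / 2"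
        unfolding bdd_above_def by blast
      then obtain pol where "pol \<in> P" "\<not> lambda_min (feat_cov nu rho lay mu phi pol g) \<le> eta / 2"
        by blast
      thus ?thesis using that by simp
    qed
    interpret M: prob_space "L pol g" using LP[OF pol] by simp
    have S: "sets (L pol g) = sets nu" using LP[OF pol] by simp
    have sp: "space (L pol g) = space nu" using sets_eq_imp_space_eq[OF S] .
    have AM: "AE y in L pol g. lay y = g \<and> y \<in> space nu" using LP[OF pol] by simp
    define F where "F y = (\<Sum>a\<in>UNIV. pmf (pol y) a *\<^sub>R outer (phi g y a))" for y
    have Sig: "feat_cov nu rho lay mu phi pol g = integral\<^sup>L (L pol g) F"
      by (simp add: feat_cov_def F_def[abs_def])
    have FM: "F \<in> borel_measurable (L pol g)"
    proof -
      have [measurable]: "(\<lambda>x. pmf (pol x) a) \<in> borel_measurable nu" for a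
        using pol P_def by (simp add: markov_policies_def)
      have [measurable]: "(\<lambda>x. outer (phi g x a)) \<in> borel_measurable nu" for a
        by (rule borel_measurable_continuous_on[OF cont_outer phi_m[OF gH]])
      have "F \<in> borel_measurable nu" unfolding F_def by measurable
      thus ?thesis using measurable_cong_sets[OF S refl] by blast
    qed
    have intF: "integrable (L pol g) F"
    proof (rule M.integrable_const_bound[where B="real CARD('d)"])
      show "AE y in L pol g. norm (F y) \<le> real CARD('d)"
      proof (rule AE_I2)
        fix y assume y: "y \<in> space (L pol g)"
        have "norm (F y) \<le> (\<Sum>a\<in>UNIV. norm (pmf (pol y) a *\<^sub>R outer (phi g y a)))"
          unfolding F_def by (rule norm_sum)
        also have "\<dots> \<le> (\<Sum>a\<in>UNIV. pmf (pol y) a * real CARD('d))"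
        proof (intro sum_mono)
          fix a
          have n1: "norm (phi g y a) \<le> 1" using phi_b[OF gH] y sp by simp
          have "norm (outer (phi g y a)) \<le> real CARD('d) * (norm (phi g y a) * norm (phi g y a))"
            by (rule norm_outer)
          also have "\<dots> \<le> real CARD('d) * 1"
            using n1 by (intro mult_left_mono) (auto simp: mult_le_one)
          finally show "norm (pmf (pol y) a *\<^sub>R outer (phi g y a)) \<le> pmf (pol y) a * real CARD('d)"
            by (simp add: mult_left_mono)
        qed
        also have "\<dots> = real CARD('d)" by (simp add: sum_distrib_right[symmetric] sum_pmf_eq_1)
        finally show "norm (F y) \<le> real CARD('d)" .
      qed
    qed (rule FM)
    have Fsym: "transpose (F y) = F y" for y
      by (simp add: F_def real_vector.linear_sum[OF linear_transpose] linear_cmul[OF linear_transpose] transpose_outer)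
    have bltr: "bounded_linear (transpose :: real^'d^'d \<Rightarrow> real^'d^'d)"
      using linear_transpose by (simp add: linear_conv_bounded_linear)
    have sym: "transpose (feat_cov nu rho lay mu phi pol g) = feat_cov nu rho lay mu phi pol g"
      unfolding Sig integral_bounded_linear[OF bltr intF, symmetric] Fsym ..
    define T where "T A = th \<bullet> (A *v th)" for A :: "real^'d^'d"
    have linT: "linear T"
    proof (rule linearI)
      fix A B :: "real^'d^'d" and c :: real
      show "T (A + B) = T A + T B"
        by (simp add: T_def matrix_vector_mult_add_rdistrib inner_add_right)
      have "(c *\<^sub>R A) *v th = c *\<^sub>R (A *v th)" by (rule scaleR_matrix_vector_assoc[symmetric])
      thus "T (c *\<^sub>R A) = c *\<^sub>R T A" by (simp add: T_def)
    qed
    have blT: "bounded_linear T" using linT by (simp add: linear_conv_bounded_linear)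
    have TF: "T (F y) = (\<Sum>a\<in>UNIV. pmf (pol y) a * (th \<bullet> phi g y a)^2)" for y
      unfolding F_def real_vector.linear_sum[OF linT] linear_cmul[OF linT]
      by (simp add: T_def outer_mult power2_eq_square inner_commute)
    have psiI: "integrable (L pol g) (psi pol g)" using intpsi[OF pol] .
    have pw: "T (F y) \<le> th \<bullet> psi pol g y" if "lay y = g \<and> y \<in> space nu" for y
    proof -
      have "(th \<bullet> phi g y a)^2 \<le> th \<bullet> phi g y a" for a
      proof -
        have "0 \<le> mu (Suc g) x \<bullet> phi g y a" using nonneg[OF gH, of y x a] that xs by simp
        hence z: "0 \<le> th \<bullet> phi g y a" using nmp hg by (simp add: th_def)
        have "th \<bullet> phi g y a \<le> norm th * norm (phi g y a)" by (rule norm_cauchy_schwarz)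
        also have "\<dots> \<le> 1" using nth phi_b[OF gH, of y a] that by simp
        finally have "th \<bullet> phi g y a \<le> 1" .
        thus ?thesis using z by (simp add: power2_eq_square mult_left_le)
      qed
      hence "(\<Sum>a\<in>UNIV. pmf (pol y) a * (th \<bullet> phi g y a)^2) \<le> (\<Sum>a\<in>UNIV. pmf (pol y) a * (th \<bullet> phi g y a))"
        by (intro sum_mono mult_left_mono) auto
      thus ?thesis by (simp add: TF psi_inner)
    qed
    have "eta / 2 < lambda_min (feat_cov nu rho lay mu phi pol g)" by (rule lam)
    also have "\<dots> = lambda_min (feat_cov nu rho lay mu phi pol g) * (th \<bullet> th)" using tt by simp
    also have "\<dots> \<le> T (feat_cov nu rho lay mu phi pol g)" unfolding T_def by (rule rayleigh[OF sym])
    also have "\<dots> = (\<integral>y. T (F y) \<partial>L pol g)" unfolding Sig by (rule integral_bounded_linear[OF blT intF, symmetric])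
    also have "\<dots> \<le> (\<integral>y. th \<bullet> psi pol g y \<partial>L pol g)"
    proof (rule integral_mono_AE)
      show "integrable (L pol g) (\<lambda>y. T (F y))" by (rule integrable_bounded_linear[OF blT intF])
      show "integrable (L pol g) (\<lambda>y. th \<bullet> psi pol g y)" using psiI by simp
      show "AE y in L pol g. T (F y) \<le> th \<bullet> psi pol g y" using AM by eventually_elim (rule pw)
    qed
    also have "\<dots> = th \<bullet> integral\<^sup>L (L pol g) (psi pol g)" using psiI by simp
    finally have key: "eta / 2 < th \<bullet> integral\<^sup>L (L pol g) (psi pol g)" .
    have occ_eq: "occ_density nu rho lay mu phi pol h x = nm * (th \<bullet> integral\<^sup>L (L pol g) (psi pol g))"
      using nmp by (simp add: occ th_def)
    have le1: "th \<bullet> integral\<^sup>L (L pol g) (psi pol g) \<le> 1"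
      using norm_cauchy_schwarz[of th "integral\<^sup>L (L pol g) (psi pol g)"] nth npsi[OF pol] by simp
    have e1: "eta / 2 \<le> 1" using key le1 by simp
    have "(eta / 2) powr (3 / 2) \<le> (eta / 2) powr 1"
      by (rule powr_mono') (use eta_pos e1 in auto)
    hence pw2: "(eta / 2) powr (3 / 2) \<le> eta / 2" using eta_pos by simp
    have "(eta / 2) powr (3 / 2) * norm (mu h x) \<le> nm * (eta / 2)"
      using pw2 nmp by (simp add: nm_def mult.commute mult_left_mono)
    also have "\<dots> \<le> occ_density nu rho lay mu phi pol h x"
      unfolding occ_eq using key nmp by simp
    also have "\<dots> \<le> (SUP pol\<in>P. occ_density nu rho lay mu phi pol h x)"
      by (rule cSUP_upper[OF pol bdd])
    finally show ?thesis using P_def by simp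
  qed
qed

end


theorem mainTheorem8:
  fixes H :: nat and nu rho :: "'s measure" and lay :: "'s \<Rightarrow> nat"
    and mu :: "nat \<Rightarrow> 's \<Rightarrow> real^'d"
    and phi :: "nat \<Rightarrow> 's \<Rightarrow> 'a::finite \<Rightarrow> real^'d"
    and eta :: real
  assumes mdp: "low_rank_mdp H nu rho lay mu phi"
    and eta_pos: "eta > 0"
    and coverage: "\<forall>h\<in>{1..<H}.
        (SUP pol\<in>markov_policies nu. lambda_min (feat_cov nu rho lay mu phi pol h)) \<ge> eta"
  shows "\<forall>h\<in>{2..H}. \<forall>x\<in>space nu \<inter> layer_set lay h.
        (SUP pol\<in>markov_policies nu. occ_density nu rho lay mu phi pol h x)
          \<ge> (eta / 2) powr (3 / 2) * norm (mu h x)"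
proof -
  interpret lrm H nu rho lay mu phi by (rule lrm.intro[OF mdp])
  show ?thesis using main[OF eta_pos coverage] by blast
qed

end
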